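(* Let $A,B\in\mathbb{Z}$ with $4A^3+27B^2\ne0$, let $M$ be a positive integer with $\max\{10\sqrt{|A|},5\sqrt[3]{|B|}\}\le M$, let $D$ be a squarefree positive integer and $E_D: y^2=x^3+D^2Ax+D^3B$. Let $P\in E_D(\mathbb{Q})$ with $MD\le x(P)$. Then \[0.01\,x(P)\le x(3P)\le 0.27\,x(P).\] *)

theory Defs
  imports Complex_Main "HOL-Computational_Algebra.Squarefree"
begin

datatype 'a ecpt = Infty | Pt 'a 'a

definition on_curve :: "'a::field \<Rightarrow> 'a \<Rightarrow> 'a ecpt \<Rightarrow> bool" where
  "on_curve a b P = (case P of Infty \<Rightarrow> True | Pt x y \<Rightarrow> y^2 = x^3 + a*x + b)"

fun ec_add :: "'a::field \<Rightarrow> 'a ecpt \<Rightarrow> 'a ecpt \<Rightarrow> 'a ecpt" where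
  "ec_add a Infty Q = Q"
| "ec_add a P Infty = P"
| "ec_add a (Pt x1 y1) (Pt x2 y2) =
     (if x1 = x2 \<and> y1 = - y2 then Infty
      else let l = (if x1 = x2 then (3 * x1^2 + a) / (2 * y1) else (y2 - y1) / (x2 - x1));
               x3 = l^2 - x1 - x2
           in Pt x3 (l * (x1 - x3) - y1))"

end

theory Submission
  imports Defs
begin
lemma polyb:
  fixes u v :: rat
  assumes u: "\<bar>u\<bar> \<le> 1" and v: "\<bar>v\<bar> \<le> 1"
  defines "s \<equiv> 1 + u/100 + v/125"
  and "H \<equiv> 3 + 6*(u/100) + 12*(v/125) - (u/100)^2"
  and "G \<equiv> 2 + 10*(u/100) + 40*(v/125) - 10*(u/100)^2 - 8*(u/100)*(v/125) - 2*(u/100)^3 - 16*(v/125)^2"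
  shows "8*s*(3+u/100)*H - 64*s^3 \<le> 99/100*H^2" "73/100*H^2 \<le> 8*s*(3+u/100)*H - 64*s^3"
proof -
  have m: "\<bar>u^i * v^j\<bar> \<le> 1" for i j :: nat
    using u v by (simp add: abs_mult power_abs power_le_one mult_le_one)
  have e1: "99/100*H^2 - 4*s*G = (91/100) + (-2418/3125)*v + (1164/390625)*v^2 + (64/1953125)*v^3 + (-309/2500)*u + (-159/78125)*u*v + (24/390625)*u*v^2 + (297/100000)*u^2 + (603/15625000)*u^2*v + (903/25000000)*u^3 + (1/15625000)*u^3*v + (899/10000000000)*u^4"
    unfolding s_def H_def G_def by (simp add: field_simps power2_eq_square power3_eq_cube power4_eq_xxxx)
  have e2: "4*s*G - 73/100*H^2 = (143/100) + (2886/3125)*v + (-228/390625)*v^2 + (-64/1953125)*v^3 + (543/2500)*u + (393/78125)*u*v + (-24/390625)*u*v^2 + (-219/100000)*u^2 + (-681/15625000)*u^2*v + (-981/25000000)*u^3 + (-1/15625000)*u^3*v + (-873/10000000000)*u^4"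
    unfolding s_def H_def G_def by (simp add: field_simps power2_eq_square power3_eq_cube power4_eq_xxxx)
  have b: "\<bar>v\<bar> \<le> 1" "\<bar>v^2\<bar> \<le> 1" "\<bar>v^3\<bar> \<le> 1" "\<bar>u\<bar> \<le> 1" "\<bar>u*v\<bar> \<le> 1" "\<bar>u*v^2\<bar> \<le> 1"
     "\<bar>u^2\<bar> \<le> 1" "\<bar>u^2*v\<bar> \<le> 1" "\<bar>u^3\<bar> \<le> 1" "\<bar>u^3*v\<bar> \<le> 1" "\<bar>u^4\<bar> \<le> 1"
    using m[of 0 1] m[of 0 2] m[of 0 3] m[of 1 0] m[of 1 1] m[of 1 2] m[of 2 0] m[of 2 1] m[of 3 0] m[of 3 1] m[of 4 0] by simp_all
  have g: "4*s*G = 8*s*(3+u/100)*H - 64*s^3"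
    unfolding s_def H_def G_def by (simp add: field_simps power2_eq_square power3_eq_cube)
  show "8*s*(3+u/100)*H - 64*s^3 \<le> 99/100*H^2" using e1 b g unfolding abs_le_iff by linarith
  show "73/100*H^2 \<le> 8*s*(3+u/100)*H - 64*s^3" using e2 b g unfolding abs_le_iff by linarith
qed

lemma triple:
  fixes a b x y :: rat
  assumes x: "x > 0" and ab: "\<bar>a\<bar> \<le> x^2/100" and bb: "\<bar>b\<bar> \<le> x^3/125"
    and cu: "y^2 = x^3 + a*x + b"
  shows "\<exists>x3 y3. ec_add a (Pt x y) (ec_add a (Pt x y) (Pt x y)) = Pt x3 y3
           \<and> 0.01 * x \<le> x3 \<and> x3 \<le> 0.27 * x"
proof -
  define u where "u = 100*a/x^2"
  define v where "v = 125*b/x^3"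
  have x2p: "x^2 > 0" "x^3 > 0" using x by auto
  have ua: "a = u*x^2/100" unfolding u_def using x2p by simp
  have vb: "b = v*x^3/125" unfolding v_def using x2p by simp
  have uu: "\<bar>u\<bar> \<le> 1" unfolding u_def using ab x2p by (simp add: abs_div abs_mult divide_le_eq)
  have vv: "\<bar>v\<bar> \<le> 1" unfolding v_def using bb x2p by (simp add: abs_div abs_mult divide_le_eq)
  define s where "s = 1 + u/100 + v/125"
  define H where "H = 3 + 6*(u/100) + 12*(v/125) - (u/100)^2"
  have sp: "s > 0" unfolding s_def using uu vv by (simp add: abs_le_iff)
  have u2: "u^2 \<le> 1" using uu by (metis abs_ge_zero power2_abs power_le_one)
  have Hp: "H > 0" unfolding H_def using uu vv u2 by (simp add: abs_le_iff power_divide)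
  define Y where "Y = x^3 + a*x + b"
  have Ys: "Y = x^3 * s" unfolding Y_def s_def ua vb by (simp add: field_simps power2_eq_square power3_eq_cube)
  have Yp: "Y > 0" unfolding Ys using sp x2p by simp
  have yY: "y^2 = Y" using cu Y_def by simp
  have y0: "y \<noteq> 0" using yY Yp by auto
  define Hh where "Hh = 3*x^4 + 6*a*x^2 + 12*b*x - a^2"
  have HH: "Hh = x^4 * H" unfolding Hh_def H_def ua vb by (simp add: field_simps power2_eq_square power3_eq_cube power4_eq_xxxx)
  have Hhp: "Hh > 0" unfolding HH using Hp x by simp
  define l where "l = (3 * x^2 + a) / (2 * y)"
  define x2 where "x2 = l^2 - x - x"
  define y2 where "y2 = l * (x - x2) - y"
  have d: "ec_add a (Pt x y) (Pt x y) = Pt x2 y2"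
    using y0 by (simp add: Let_def l_def x2_def y2_def)
  have yl: "y * l = (3*x^2+a)/2" unfolding l_def using y0 by simp
  have l2: "l^2 = (3*x^2+a)^2/(4*Y)" unfolding l_def yY[symmetric] by (simp add: power_divide power_mult_distrib)
  have dx: "x2 - x = - Hh/(4*Y)"
  proof -
    have "x2 - x = ((3*x^2+a)^2 - 12*x*Y)/(4*Y)" unfolding x2_def l2 using Yp by (simp add: field_simps)
    also have "(3*x^2+a)^2 - 12*x*Y = - Hh" unfolding Y_def Hh_def by (simp add: algebra_simps power2_eq_square power3_eq_cube power4_eq_xxxx)
    finally show ?thesis by simp
  qed
  have ne: "x \<noteq> x2" using dx Hhp Yp by auto
  define l' where "l' = (y2 - y) / (x2 - x)"
  define x3 where "x3 = l'^2 - x - x2"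
  define y3 where "y3 = l' * (x - x3) - y"
  have t: "ec_add a (Pt x y) (Pt x2 y2) = Pt x3 y3"
    using ne by (simp add: Let_def l'_def x3_def y3_def)
  have ll: "l' = 8*y*Y/Hh - l"
  proof -
    have "x - x2 = Hh/(4*Y)" using dx by (simp add: algebra_simps)
    hence e: "y2 - y = l*Hh/(4*Y) - 2*y" unfolding y2_def by simp
    have "l' = (l*Hh/(4*Y) - 2*y)/(-Hh/(4*Y))" unfolding l'_def e dx by simp
    also have "\<dots> = 8*y*Y/Hh - l" using Yp Hhp by (simp add: field_simps)
    finally show ?thesis .
  qed
  have x3e: "x3 = x + 64*Y^3/Hh^2 - 8*Y*(3*x^2+a)/Hh"
  proof -
    have "x3 = (8*y*Y/Hh)^2 - 2*(8*Y/Hh)*(y*l) + l^2 - x - x2"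
      unfolding x3_def ll by (simp add: algebra_simps power2_eq_square)
    also have "\<dots> = 64*y^2*Y^2/Hh^2 - 8*Y*(3*x^2+a)/Hh + x"
      unfolding yl x2_def by (simp add: power_divide power_mult_distrib)
    finally show ?thesis unfolding yY by (simp add: power2_eq_square power3_eq_cube)
  qed
  have x3u: "x3 = x * (1 - (8*s*(3+u/100)*H - 64*s^3)/H^2)"
    unfolding x3e HH Ys ua using x Hp by (simp add: field_simps power2_eq_square power3_eq_cube power4_eq_xxxx)
  have pb: "8*s*(3+u/100)*H - 64*s^3 \<le> 99/100*H^2" "73/100*H^2 \<le> 8*s*(3+u/100)*H - 64*s^3"
    using polyb[OF uu vv] unfolding s_def H_def by auto
  have H2: "H^2 > 0" using Hp by simp
  have q1: "(8*s*(3+u/100)*H - 64*s^3)/H^2 \<le> 99/100" using pb(1) H2 by (simp add: divide_le_eq)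
  have q2: "73/100 \<le> (8*s*(3+u/100)*H - 64*s^3)/H^2" using pb(2) H2 by (simp add: le_divide_eq)
  have "0.01 * x \<le> x3" unfolding x3u using q1 x by (simp add: mult_left_mono[of _ _ x, simplified])
  moreover have "x3 \<le> 0.27 * x" unfolding x3u using q2 x by (simp add: mult_left_mono[of _ _ x, simplified])
  ultimately show ?thesis using d t by auto
qed

theorem lemma3p8:
  fixes A B M D :: int and x y :: rat
  assumes "4 * A^3 + 27 * B^2 \<noteq> 0"
    and "M > 0"
    and "10 * sqrt \<bar>real_of_int A\<bar> \<le> real_of_int M"
    and "5 * root 3 \<bar>real_of_int B\<bar> \<le> real_of_int M"
    and "D > 0" and "squarefree D"
    and "on_curve (of_int (D^2 * A)) (of_int (D^3 * B)) (Pt x y)"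
    and "of_int (M * D) \<le> x"
  shows "\<exists>x3 y3. ec_add (of_int (D^2 * A)) (Pt x y) (ec_add (of_int (D^2 * A)) (Pt x y) (Pt x y)) = Pt x3 y3
           \<and> 0.01 * x \<le> x3 \<and> x3 \<le> 0.27 * x"
proof -
  have MD: "M * D \<ge> 1" using assms(2,5) by (smt (verit) mult_le_cancel_left1)
  have MD0: "(0::rat) \<le> of_int (M*D)" using MD by linarith
  have MDx: "(0::rat) \<le> of_int (M*D)" "of_int (M*D) \<le> x" using MD0 assms(8) by blast+
  have MD1: "(1::rat) \<le> of_int (M*D)" using MD by (metis of_int_1 of_int_le_iff)
  have x: "x > 0" using MD1 assms(8) by linarith
  have rA: "100 * \<bar>real_of_int A\<bar> \<le> real_of_int M ^ 2"
  proof -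
    have "(10 * sqrt \<bar>real_of_int A\<bar>)^2 \<le> real_of_int M ^ 2"
      using assms(3) by (intro power_mono) auto
    thus ?thesis by (simp add: power_mult_distrib)
  qed
  have "real_of_int (100 * \<bar>A\<bar>) \<le> real_of_int (M^2)" using rA by simp
  hence iA: "100 * \<bar>A\<bar> \<le> M^2" by (simp only: of_int_le_iff)
  have rB: "125 * \<bar>real_of_int B\<bar> \<le> real_of_int M ^ 3"
  proof -
    have "(5 * root 3 \<bar>real_of_int B\<bar>)^3 \<le> real_of_int M ^ 3"
      using assms(4) by (intro power_mono) auto
    thus ?thesis by (simp add: power_mult_distrib real_root_pow_pos2)
  qed
  have "real_of_int (125 * \<bar>B\<bar>) \<le> real_of_int (M^3)" using rB by simp
  hence iB: "125 * \<bar>B\<bar> \<le> M^3" by (simp only: of_int_le_iff)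
  have "100 * \<bar>D^2 * A\<bar> \<le> (M*D)^2"
    using iA assms(5) by (simp add: abs_mult power_mult_distrib mult.commute mult.left_commute)
  hence "(of_int (100 * \<bar>D^2 * A\<bar>)::rat) \<le> of_int ((M*D)^2)" by (simp only: of_int_le_iff)
  hence a1: "100 * \<bar>(of_int (D^2*A)::rat)\<bar> \<le> (of_int (M*D))^2" by simp
  have "(of_int (M*D))^2 \<le> x^2" using MDx by (intro power_mono) auto
  hence ab: "\<bar>(of_int (D^2*A)::rat)\<bar> \<le> x^2/100" using a1 by simp
  have "125 * \<bar>D^3 * B\<bar> \<le> (M*D)^3"
    using iB assms(5) by (simp add: abs_mult power_mult_distrib mult.commute mult.left_commute)
  hence "(of_int (125 * \<bar>D^3 * B\<bar>)::rat) \<le> of_int ((M*D)^3)" by (simp only: of_int_le_iff)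
  hence b1: "125 * \<bar>(of_int (D^3*B)::rat)\<bar> \<le> (of_int (M*D))^3" by simp
  have "(of_int (M*D))^3 \<le> x^3" using MDx by (intro power_mono) auto
  hence bb: "\<bar>(of_int (D^3*B)::rat)\<bar> \<le> x^3/125" using b1 by simp
  have cu: "y^2 = x^3 + of_int (D^2*A)*x + of_int (D^3*B)" using assms(7) by (simp add: on_curve_def)
  show ?thesis using triple[OF x ab bb cu] .
qed

end
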